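(* Let $G=(V,E)$ be a graph with no isolated vertices and $m\ge1$ edges, and let $d$ be an optimal solution of $\mathrm{IP}_{\mathrm{sparse}}$. Let $G_d=(V,E_d)$ be the graph with an edge $\{i,j\}$ for every pair $i\neq j$ with $d_{i,j}=0$. Then every connected component $C$ of $G_d$ induces a connected subgraph $G[C]$ of $G$.
   Context: $G=(V,E)$ is an undirected simple graph, $V=\{1,\dots,n\}$, $m=|E|$, adjacency matrix $A$, degrees $d_i$, modularity matrix $B_{i,j}=A_{i,j}-\frac{d_id_j}{2m}$. Variables $d_{i,j}$ satisfy $d_{i,j}=d_{j,i}$, $d_{i,i}=0$. $N(i)$ is the neighbor set of $i$ and $N(i,j)=(N(i)\cup N(j))\setminus\{i,j\}$. $\mathrm{IP}_{\mathrm{sparse}}$: maximize $-\frac{1}{2m}\sum_{i,j}B_{i,j}d_{i,j}$ subject to $d_{i,k}+d_{k,j}\ge d_{i,j}$ for every pair $i\ne j$ and every $k\in N(i,j)$, and $d_{i,j}\in\{0,1\}$ for all $i\ne j$. *)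

theory Defs
  imports Complex_Main
begin

definition simple_graph :: "nat \<Rightarrow> (nat \<Rightarrow> nat \<Rightarrow> bool) \<Rightarrow> bool" where
  "simple_graph n adj \<longleftrightarrow>
     (\<forall>i j. adj i j \<longrightarrow> i \<in> {1..n} \<and> j \<in> {1..n}) \<and>
     (\<forall>i j. adj i j \<longleftrightarrow> adj j i) \<and> (\<forall>i. \<not> adj i i)"

definition num_edges :: "nat \<Rightarrow> (nat \<Rightarrow> nat \<Rightarrow> bool) \<Rightarrow> nat" where
  "num_edges n adj = card {{i, j} | i j. i \<in> {1..n} \<and> j \<in> {1..n} \<and> adj i j}"

definition degree :: "nat \<Rightarrow> (nat \<Rightarrow> nat \<Rightarrow> bool) \<Rightarrow> nat \<Rightarrow> nat" where
  "degree n adj i = card {j \<in> {1..n}. adj i j}"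

definition adjm :: "(nat \<Rightarrow> nat \<Rightarrow> bool) \<Rightarrow> nat \<Rightarrow> nat \<Rightarrow> real" where
  "adjm adj i j = (if adj i j then 1 else 0)"

definition modularity_matrix :: "nat \<Rightarrow> (nat \<Rightarrow> nat \<Rightarrow> bool) \<Rightarrow> nat \<Rightarrow> nat \<Rightarrow> real" where
  "modularity_matrix n adj i j =
     adjm adj i j - real (degree n adj i) * real (degree n adj j) / (2 * real (num_edges n adj))"

definition nbrs :: "nat \<Rightarrow> (nat \<Rightarrow> nat \<Rightarrow> bool) \<Rightarrow> nat \<Rightarrow> nat set" where
  "nbrs n adj i = {k \<in> {1..n}. adj i k}"

definition nbrs2 :: "nat \<Rightarrow> (nat \<Rightarrow> nat \<Rightarrow> bool) \<Rightarrow> nat \<Rightarrow> nat \<Rightarrow> nat set" where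
  "nbrs2 n adj i j = (nbrs n adj i \<union> nbrs n adj j) - {i, j}"

definition ip_objective :: "nat \<Rightarrow> (nat \<Rightarrow> nat \<Rightarrow> bool) \<Rightarrow> (nat \<Rightarrow> nat \<Rightarrow> real) \<Rightarrow> real" where
  "ip_objective n adj d =
     - (1 / (2 * real (num_edges n adj))) *
       (\<Sum>i\<in>{1..n}. \<Sum>j\<in>{1..n}. modularity_matrix n adj i j * d i j)"

definition ip_sparse_feasible :: "nat \<Rightarrow> (nat \<Rightarrow> nat \<Rightarrow> bool) \<Rightarrow> (nat \<Rightarrow> nat \<Rightarrow> real) \<Rightarrow> bool" where
  "ip_sparse_feasible n adj d \<longleftrightarrow>
     (\<forall>i\<in>{1..n}. \<forall>j\<in>{1..n}. d i j = d j i) \<and>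
     (\<forall>i\<in>{1..n}. d i i = 0) \<and>
     (\<forall>i\<in>{1..n}. \<forall>j\<in>{1..n}. i \<noteq> j \<longrightarrow> d i j \<in> {0, 1}) \<and>
     (\<forall>i\<in>{1..n}. \<forall>j\<in>{1..n}. i \<noteq> j \<longrightarrow>
        (\<forall>k\<in>nbrs2 n adj i j. d i k + d k j \<ge> d i j))"

definition ip_sparse_optimal :: "nat \<Rightarrow> (nat \<Rightarrow> nat \<Rightarrow> bool) \<Rightarrow> (nat \<Rightarrow> nat \<Rightarrow> real) \<Rightarrow> bool" where
  "ip_sparse_optimal n adj d \<longleftrightarrow>
     ip_sparse_feasible n adj d \<and>
     (\<forall>d'. ip_sparse_feasible n adj d' \<longrightarrow> ip_objective n adj d' \<le> ip_objective n adj d)"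

definition Gd_rel :: "nat \<Rightarrow> (nat \<Rightarrow> nat \<Rightarrow> real) \<Rightarrow> (nat \<times> nat) set" where
  "Gd_rel n d = {(i, j). i \<in> {1..n} \<and> j \<in> {1..n} \<and> i \<noteq> j \<and> d i j = 0}"

definition G_rel :: "(nat \<Rightarrow> nat \<Rightarrow> bool) \<Rightarrow> (nat \<times> nat) set" where
  "G_rel adj = {(i, j). adj i j}"

definition component_of :: "nat \<Rightarrow> (nat \<times> nat) set \<Rightarrow> nat \<Rightarrow> nat set" where
  "component_of n R v = {u \<in> {1..n}. (v, u) \<in> R\<^sup>*}"

definition is_component :: "nat \<Rightarrow> (nat \<times> nat) set \<Rightarrow> nat set \<Rightarrow> bool" where
  "is_component n R C \<longleftrightarrow> (\<exists>v\<in>{1..n}. C = component_of n R v)"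

definition induced_connected :: "(nat \<times> nat) set \<Rightarrow> nat set \<Rightarrow> bool" where
  "induced_connected R S \<longleftrightarrow>
     (\<forall>i\<in>S. \<forall>j\<in>S. (i, j) \<in> (R \<inter> (S \<times> S))\<^sup>*)"

end

theory Submission
  imports Defs
begin

lemma rtrancl_exit:
  assumes "(x, y) \<in> R\<^sup>*" "x \<in> S" "y \<notin> S"
  shows "\<exists>a b. (a, b) \<in> R \<and> a \<in> S \<and> b \<notin> S \<and> (x, a) \<in> R\<^sup>*"
  using assms
proof (induction rule: rtrancl_induct)
  case base then show ?case by simp
next
  case (step y z)
  show ?case
  proof (cases "y \<in> S")
    case True then show ?thesis using step by blast
  next
    case False then show ?thesis using step by blast
  qed
qed

lemma sum_neg_one:
  fixes f :: "nat \<Rightarrow> real"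
  assumes "finite A" "\<forall>x\<in>A. f x \<le> 0" "a \<in> A" "f a < 0"
  shows "sum f A < 0"
proof -
  have "sum f A = f a + sum f (A - {a})" using assms by (simp add: sum.remove)
  moreover have "sum f (A - {a}) \<le> 0" using assms by (intro sum_nonpos) auto
  ultimately show ?thesis using assms by simp
qed

theorem mainTheorem2:
  fixes n :: nat and adj :: "nat \<Rightarrow> nat \<Rightarrow> bool" and d :: "nat \<Rightarrow> nat \<Rightarrow> real"
    and C :: "nat set"
  assumes "simple_graph n adj"
    and "\<forall>i\<in>{1..n}. \<exists>j. adj i j"
    and "num_edges n adj \<ge> 1"
    and "ip_sparse_optimal n adj d"
    and "is_component n (Gd_rel n d) C"
  shows "induced_connected (G_rel adj) C"
proof (rule ccontr)
  assume nc: "\<not> induced_connected (G_rel adj) C"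
  have sg: "\<And>i j. adj i j \<Longrightarrow> i \<in> {1..n} \<and> j \<in> {1..n}" "\<And>i j. adj i j = adj j i" "\<And>i. \<not> adj i i"
    using assms(1) unfolding simple_graph_def by blast+
  have feas: "ip_sparse_feasible n adj d" and opt: "\<And>d'. ip_sparse_feasible n adj d' \<Longrightarrow> ip_objective n adj d' \<le> ip_objective n adj d"
    using assms(4) unfolding ip_sparse_optimal_def by auto
  have dsym: "\<And>i j. i \<in> {1..n} \<Longrightarrow> j \<in> {1..n} \<Longrightarrow> d i j = d j i"
    and ddiag: "\<And>i. i \<in> {1..n} \<Longrightarrow> d i i = 0"
    and d01: "\<And>i j. i \<in> {1..n} \<Longrightarrow> j \<in> {1..n} \<Longrightarrow> i \<noteq> j \<Longrightarrow> d i j \<in> {0,1}"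
    and dtri: "\<And>i j k. i \<in> {1..n} \<Longrightarrow> j \<in> {1..n} \<Longrightarrow> i \<noteq> j \<Longrightarrow> k \<in> nbrs2 n adj i j \<Longrightarrow> d i k + d k j \<ge> d i j"
    using feas unfolding ip_sparse_feasible_def by blast+
  let ?R = "Gd_rel n d"
  obtain v where v: "v \<in> {1..n}" "C = component_of n ?R v" using assms(5) unfolding is_component_def by blast
  have symR: "sym ?R" unfolding sym_def Gd_rel_def using dsym by auto
  have symRs: "sym (?R\<^sup>*)" using symR by (rule sym_rtrancl)
  have Cin: "\<And>u. u \<in> C \<longleftrightarrow> u \<in> {1..n} \<and> (v, u) \<in> ?R\<^sup>*" using v unfolding component_of_def by blast
  have Rclos: "\<And>a b. a \<in> C \<Longrightarrow> (a, b) \<in> ?R \<Longrightarrow> b \<in> C"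
    using Cin unfolding Gd_rel_def by (auto intro: rtrancl_into_rtrancl)
  let ?G = "G_rel adj \<inter> C \<times> C"
  obtain i0 j0 where ij0: "i0 \<in> C" "j0 \<in> C" "(i0, j0) \<notin> ?G\<^sup>*"
    using nc unfolding induced_connected_def by blast
  define C1 where "C1 = {u \<in> C. (i0, u) \<in> ?G\<^sup>*}"
  define C2 where "C2 = C - C1"
  have i0C1: "i0 \<in> C1" using ij0 unfolding C1_def by auto
  have j0C2: "j0 \<in> C2" using ij0 unfolding C1_def C2_def by auto
  have noadj: "\<And>a b. a \<in> C1 \<Longrightarrow> b \<in> C2 \<Longrightarrow> \<not> adj a b"
  proof
    fix a b assume "a \<in> C1" "b \<in> C2" "adj a b"
    then have "(a, b) \<in> ?G" unfolding C1_def C2_def G_rel_def by auto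
    then show False using \<open>a \<in> C1\<close> \<open>b \<in> C2\<close> unfolding C1_def C2_def
      by (auto intro: rtrancl_into_rtrancl)
  qed
  have "(i0, j0) \<in> ?R\<^sup>*"
  proof -
    have "(v, i0) \<in> ?R\<^sup>*" "(v, j0) \<in> ?R\<^sup>*" using Cin ij0 by auto
    then have "(i0, v) \<in> ?R\<^sup>*" using symRs by (auto simp: sym_def)
    then show ?thesis using \<open>(v, j0) \<in> ?R\<^sup>*\<close> by auto
  qed
  then obtain a b where ab: "(a, b) \<in> ?R" "a \<in> C1" "b \<notin> C1"
    using rtrancl_exit[of i0 j0 ?R C1] i0C1 j0C2 unfolding C2_def by blast
  have bC2: "b \<in> C2" using ab Rclos unfolding C1_def C2_def by auto
  have dab: "d a b = 0" and abn: "a \<in> {1..n}" "b \<in> {1..n}" "a \<noteq> b" using ab(1) unfolding Gd_rel_def by auto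
  define sp where "sp i j \<longleftrightarrow> (i \<in> C1 \<and> j \<in> C2) \<or> (i \<in> C2 \<and> j \<in> C1)" for i j
  define d' where "d' i j = (if sp i j then 1 else d i j)" for i j
  have C12: "C1 \<inter> C2 = {}" "C1 \<subseteq> C" "C2 \<subseteq> C" unfolding C1_def C2_def by auto
  have Csub: "C \<subseteq> {1..n}" using Cin by auto
  have sp_ne: "\<And>i j. sp i j \<Longrightarrow> i \<noteq> j" using C12 unfolding sp_def by auto
  have feas': "ip_sparse_feasible n adj d'"
    unfolding ip_sparse_feasible_def
  proof (intro conjI ballI impI)
    fix i j assume "i \<in> {1..n}" "j \<in> {1..n}"
    then show "d' i j = d' j i" unfolding d'_def sp_def using dsym by auto
  next
    fix i assume "i \<in> {1..n}" then show "d' i i = 0" unfolding d'_def using sp_ne ddiag by auto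
  next
    fix i j assume "i \<in> {1..n}" "j \<in> {1..n}" "i \<noteq> j"
    then show "d' i j \<in> {0,1}" unfolding d'_def using d01 by auto
  next
    fix i j k assume ij: "i \<in> {1..n}" "j \<in> {1..n}" "i \<noteq> j" and k: "k \<in> nbrs2 n adj i j"
    have kn: "k \<in> {1..n}" "k \<noteq> i" "k \<noteq> j" using k unfolding nbrs2_def nbrs_def by auto
    have d'ge: "\<And>x y. x \<in> {1..n} \<Longrightarrow> y \<in> {1..n} \<Longrightarrow> x \<noteq> y \<Longrightarrow> d x y \<le> d' x y"
      unfolding d'_def using d01 by fastforce
    have d'01: "\<And>x y. x \<in> {1..n} \<Longrightarrow> y \<in> {1..n} \<Longrightarrow> x \<noteq> y \<Longrightarrow> d' x y \<in> {0,1}"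
      unfolding d'_def using d01 by auto
    show "d' i k + d' k j \<ge> d' i j"
    proof (cases "sp i j")
      case False
      then have "d' i j = d i j" unfolding d'_def by simp
      also have "\<dots> \<le> d i k + d k j" using dtri ij k by blast
      also have "\<dots> \<le> d' i k + d' k j" using d'ge ij kn by (intro add_mono) auto
      finally show ?thesis .
    next
      case True
      have z1: "d' i k = 0 \<Longrightarrow> (k \<in> C1 \<longleftrightarrow> i \<in> C1) \<and> k \<in> C"
      proof -
        assume h: "d' i k = 0"
        then have ns: "\<not> sp i k" and dz: "d i k = 0" unfolding d'_def by (auto split: if_splits)
        have iC: "i \<in> C" using True C12 unfolding sp_def by auto
        have "(i, k) \<in> ?R" using dz ij kn unfolding Gd_rel_def by auto
        then have "k \<in> C" using Rclos iC by blast
        then show ?thesis using ns iC unfolding sp_def C2_def by auto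
      qed
      have z2: "d' k j = 0 \<Longrightarrow> (k \<in> C1 \<longleftrightarrow> j \<in> C1) \<and> k \<in> C"
      proof -
        assume h: "d' k j = 0"
        then have ns: "\<not> sp k j" and dz: "d k j = 0" unfolding d'_def by (auto split: if_splits)
        have jC: "j \<in> C" using True C12 unfolding sp_def by auto
        have "(j, k) \<in> ?R" using dz ij kn dsym unfolding Gd_rel_def by auto
        then have "k \<in> C" using Rclos jC by blast
        then show ?thesis using ns jC unfolding sp_def C2_def by auto
      qed
      have "(i \<in> C1) \<noteq> (j \<in> C1)" using True C12 unfolding sp_def by auto
      then have "\<not> (d' i k = 0 \<and> d' k j = 0)" using z1 z2 by blast
      moreover have "d' i k \<in> {0,1}" "d' k j \<in> {0,1}" using d'01 ij kn by auto
      moreover have "d' i j = 1" using True unfolding d'_def by simp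
      ultimately show ?thesis by auto
    qed
  qed
  define B where "B = modularity_matrix n adj"
  have m0: "real (num_edges n adj) > 0" using assms(3) by simp
  have degpos: "\<And>i. i \<in> {1..n} \<Longrightarrow> real (degree n adj i) > 0"
  proof -
    fix i assume i: "i \<in> {1..n}"
    then obtain j where "adj i j" using assms(2) by blast
    then have "j \<in> {j \<in> {1..n}. adj i j}" using sg by auto
    then have "card {j \<in> {1..n}. adj i j} > 0" by (intro card_gt_0_iff[THEN iffD2]) auto
    then show "real (degree n adj i) > 0" unfolding degree_def by simp
  qed
  define f where "f i j = B i j * (d' i j - d i j)" for i j
  have Bneg: "\<And>i j. i \<in> {1..n} \<Longrightarrow> j \<in> {1..n} \<Longrightarrow> sp i j \<Longrightarrow> B i j < 0"
  proof -
    fix i j assume h: "i \<in> {1..n}" "j \<in> {1..n}" "sp i j"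
    have "\<not> adj i j" using h(3) noadj sg(2) unfolding sp_def by blast
    then have "B i j = - (real (degree n adj i) * real (degree n adj j) / (2 * real (num_edges n adj)))"
      unfolding B_def modularity_matrix_def adjm_def by simp
    moreover have "real (degree n adj i) * real (degree n adj j) / (2 * real (num_edges n adj)) > 0"
      using degpos h m0 by simp
    ultimately show "B i j < 0" by simp
  qed
  have fle: "\<And>i j. i \<in> {1..n} \<Longrightarrow> j \<in> {1..n} \<Longrightarrow> f i j \<le> 0"
  proof -
    fix i j assume h: "i \<in> {1..n}" "j \<in> {1..n}"
    show "f i j \<le> 0"
    proof (cases "sp i j")
      case True
      then have "d i j \<in> {0,1}" using d01 h sp_ne by blast
      then have "d' i j - d i j \<ge> 0" using True unfolding d'_def by auto
      then show ?thesis unfolding f_def using Bneg[OF h True] by (simp add: mult_nonpos_nonneg)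
    next
      case False then show ?thesis unfolding f_def d'_def by simp
    qed
  qed
  have spab: "sp a b" using ab bC2 unfolding sp_def by auto
  have fab: "f a b < 0" unfolding f_def d'_def using spab dab Bneg[OF abn(1,2) spab] by simp
  have inner: "\<And>i. i \<in> {1..n} \<Longrightarrow> (\<Sum>j\<in>{1..n}. f i j) \<le> 0" using fle by (intro sum_nonpos) auto
  have innera: "(\<Sum>j\<in>{1..n}. f a j) < 0" using sum_neg_one[of "{1..n}" "f a" b] fle abn fab by auto
  have tot: "(\<Sum>i\<in>{1..n}. \<Sum>j\<in>{1..n}. f i j) < 0"
    using sum_neg_one[of "{1..n}" "\<lambda>i. \<Sum>j\<in>{1..n}. f i j" a] inner innera abn by auto
  have diff: "(\<Sum>i\<in>{1..n}. \<Sum>j\<in>{1..n}. B i j * d' i j) - (\<Sum>i\<in>{1..n}. \<Sum>j\<in>{1..n}. B i j * d i j)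
      = (\<Sum>i\<in>{1..n}. \<Sum>j\<in>{1..n}. f i j)"
    unfolding f_def by (simp add: sum_subtractf[symmetric] right_diff_distrib)
  have "ip_objective n adj d' > ip_objective n adj d"
    unfolding ip_objective_def B_def[symmetric]
    using diff tot m0 by (simp add: field_simps mult_pos_neg)
  then show False using opt[OF feas'] by simp
qed

end
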